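(* Let $0<\alpha\le 5\pi/6$. Let $E^{nr}_\alpha\subseteq E_\alpha$ be the set of edges of $E_\alpha$ that are not redundant. Then for all $u,v\in V$: $u$ and $v$ are connected in $(V,E^{nr}_\alpha)$ if and only if they are connected in $G_R$. More precisely, for every redundant edge $\{u,v\}\in E_\alpha$ there is a path from $u$ to $v$ consisting only of edges in $E^{nr}_\alpha$.
   Context: Let $V$ be a finite set of pairwise distinct points (nodes) in the Euclidean plane, $d$ the Euclidean distance, and $R>0$. Let $G_R=(V,E)$ be the undirected graph with $E=\{\{u,v\}: u\neq v,\ d(u,v)\le R\}$. Fix a finite increasing sequence of radius levels $0<r_1<r_2<\dots<r_k=R$. For $u\in V$ and $1\le i\le k$ let $S_i(u)=\{v\in V\setminus\{u\}: d(u,v)\le r_i\}$. For $0<\alpha<2\pi$, a closed cone of width $\alpha$ with apex $u$ is a set $\{u+t(\cos\varphi,\sin\varphi): t\ge 0,\ \varphi\in[\theta-\alpha/2,\theta+\alpha/2]\}$ for some $\theta$. A finite set $S\subseteq V\setminus\{u\}$ has an $\alpha$-gap (at $u$) if some closed cone of width $\alpha$ with apex $u$ contains no node of $S$ (in particular $\emptyset$ has an $\alpha$-gap). The algorithm CBTC($\alpha$) assigns to each $u$ the index $i_u$ = the least $i\in\{1,\dots,k\}$ such that $S_i(u)$ has no $\alpha$-gap, or $i_u=k$ if there is no such $i$; set $N_\alpha(u)=S_{i_u}(u)$ and $N_\alpha=\{(u,v): v\in N_\alpha(u)\}$. Let $E_\alpha=\{\{u,v\}: (u,v)\in N_\alpha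 \text{ or } (v,u)\in N_\alpha\}$ (the symmetric closure of $N_\alpha$) and $G_\alpha=(V,E_\alpha)$. Each node $u$ has a distinct integer identifier $\mathrm{ID}_u$. The edge ID of $\{u,v\}$ is the triple $\mathrm{eid}(u,v)=(d(u,v),\max(\mathrm{ID}_u,\mathrm{ID}_v),\min(\mathrm{ID}_u,\mathrm{ID}_v))$, and edge IDs are compared lexicographically. An edge $\{u,v\}\in E_\alpha$ is redundant if, for one of its endpoints, say $u$, there is $w\in V$ with $\{u,w\}\in E_\alpha$, $\angle vuw<\pi/3$, and $\mathrm{eid}(u,v)>\mathrm{eid}(u,w)$. *)

theory Defs
  imports "HOL-Analysis.Analysis"
begin

text \<open>Points of the Euclidean plane are represented as complex numbers;
  d is the Euclidean distance (dist). Radius levels r 1 < ... < r k = R are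
  given by a function r on indices 1..k.\<close>

definition S_set :: "complex set \<Rightarrow> (nat \<Rightarrow> real) \<Rightarrow> nat \<Rightarrow> complex \<Rightarrow> complex set" where
  "S_set V r i u = {v \<in> V - {u}. dist u v \<le> r i}"

definition cone :: "complex \<Rightarrow> real \<Rightarrow> real \<Rightarrow> complex set" where
  "cone u theta alpha =
     {u + complex_of_real t * cis phi | t phi.
        t \<ge> 0 \<and> theta - alpha / 2 \<le> phi \<and> phi \<le> theta + alpha / 2}"

definition has_gap :: "complex \<Rightarrow> real \<Rightarrow> complex set \<Rightarrow> bool" where
  "has_gap u alpha S \<longleftrightarrow> (\<exists>theta. cone u theta alpha \<inter> S = {})"

definition cbtc_index :: "complex set \<Rightarrow> (nat \<Rightarrow> real) \<Rightarrow> nat \<Rightarrow> real \<Rightarrow> complex \<Rightarrow> nat" where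
  "cbtc_index V r k alpha u =
     (if \<exists>i\<in>{1..k}. \<not> has_gap u alpha (S_set V r i u)
      then (LEAST i. i \<in> {1..k} \<and> \<not> has_gap u alpha (S_set V r i u))
      else k)"

definition N_alpha :: "complex set \<Rightarrow> (nat \<Rightarrow> real) \<Rightarrow> nat \<Rightarrow> real \<Rightarrow> complex \<Rightarrow> complex set" where
  "N_alpha V r k alpha u = S_set V r (cbtc_index V r k alpha u) u"

definition E_alpha :: "complex set \<Rightarrow> (nat \<Rightarrow> real) \<Rightarrow> nat \<Rightarrow> real \<Rightarrow> complex \<Rightarrow> complex \<Rightarrow> bool" where
  "E_alpha V r k alpha u v \<longleftrightarrow>
     u \<in> V \<and> v \<in> V \<and> (v \<in> N_alpha V r k alpha u \<or> u \<in> N_alpha V r k alpha v)"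

definition E_R :: "complex set \<Rightarrow> real \<Rightarrow> complex \<Rightarrow> complex \<Rightarrow> bool" where
  "E_R V R u v \<longleftrightarrow> u \<in> V \<and> v \<in> V \<and> u \<noteq> v \<and> dist u v \<le> R"

definition vangle :: "complex \<Rightarrow> complex \<Rightarrow> complex \<Rightarrow> real" where
  "vangle v u w = arccos (((v - u) \<bullet> (w - u)) / (norm (v - u) * norm (w - u)))"

definition eid :: "(complex \<Rightarrow> int) \<Rightarrow> complex \<Rightarrow> complex \<Rightarrow> real \<times> int \<times> int" where
  "eid ID u v = (dist u v, max (ID u) (ID v), min (ID u) (ID v))"

definition lex_less :: "real \<times> int \<times> int \<Rightarrow> real \<times> int \<times> int \<Rightarrow> bool" where
  "lex_less a b \<longleftrightarrow>
     fst a < fst b \<or>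
     (fst a = fst b \<and> (fst (snd a) < fst (snd b) \<or>
        (fst (snd a) = fst (snd b) \<and> snd (snd a) < snd (snd b))))"

definition redundant_at :: "complex set \<Rightarrow> (nat \<Rightarrow> real) \<Rightarrow> nat \<Rightarrow> real \<Rightarrow> (complex \<Rightarrow> int)
    \<Rightarrow> complex \<Rightarrow> complex \<Rightarrow> bool" where
  "redundant_at V r k alpha ID u v \<longleftrightarrow>
     (\<exists>w\<in>V. E_alpha V r k alpha u w \<and> vangle v u w < pi / 3 \<and> lex_less (eid ID u w) (eid ID u v))"

definition redundant :: "complex set \<Rightarrow> (nat \<Rightarrow> real) \<Rightarrow> nat \<Rightarrow> real \<Rightarrow> (complex \<Rightarrow> int)
    \<Rightarrow> complex \<Rightarrow> complex \<Rightarrow> bool" where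
  "redundant V r k alpha ID u v \<longleftrightarrow>
     E_alpha V r k alpha u v \<and>
     (redundant_at V r k alpha ID u v \<or> redundant_at V r k alpha ID v u)"

definition E_nr :: "complex set \<Rightarrow> (nat \<Rightarrow> real) \<Rightarrow> nat \<Rightarrow> real \<Rightarrow> (complex \<Rightarrow> int)
    \<Rightarrow> complex \<Rightarrow> complex \<Rightarrow> bool" where
  "E_nr V r k alpha ID u v \<longleftrightarrow> E_alpha V r k alpha u v \<and> \<not> redundant V r k alpha ID u v"

end

theory Submission imports Defs "HOL-Analysis.Analysis" begin

lemma affine_box_neg:
  fixes g00 g10 g01 g11 A B D p q P Q :: real
  assumes "g00 < 0" "g00 + P*A \<le> 0" "g00 + Q*B \<le> 0" "g00 + P*A + Q*B + P*Q*D \<le> 0"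
    and "0 \<le> p" "p < P" "0 \<le> q" "q < Q"
  shows "g00 + p*A + q*B + p*q*D < 0"
proof -
  have id: "P*Q*(g00 + p*A + q*B + p*q*D) = (P-p)*(Q-q)*g00 + p*(Q-q)*(g00+P*A)
        + (P-p)*q*(g00+Q*B) + p*q*(g00 + P*A + Q*B + P*Q*D)"
    by algebra
  have t1: "(P-p)*(Q-q)*g00 < 0" using assms by (simp add: mult_pos_neg)
  have t2: "p*(Q-q)*(g00+P*A) \<le> 0" using assms
    by (meson diff_ge_0_iff_ge less_eq_real_def mult_nonneg_nonneg mult_nonneg_nonpos)
  have t3: "(P-p)*q*(g00+Q*B) \<le> 0" using assms
    by (meson diff_ge_0_iff_ge less_eq_real_def mult_nonneg_nonneg mult_nonneg_nonpos)
  have t4: "p*q*(g00 + P*A + Q*B + P*Q*D) \<le> 0" using assms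
    by (simp add: mult_nonneg_nonpos)
  have "P*Q*(g00 + p*A + q*B + p*q*D) < 0" using id t1 t2 t3 t4 by linarith
  moreover have "P*Q > 0" using assms by simp
  ultimately show ?thesis by (meson mult_less_0_iff not_less_iff_gr_or_eq)
qed

lemma alg:
  fixes c1 c2 s1 s2 r1 r2 :: real
  assumes "0 < c1" "0 < c2" "c1^2 + s1^2 = 1" "c2^2 + s2^2 = 1"
    and "2*c1 \<le> r1" "r1 < 1" "2*c2 \<le> r2" "r2 < 1"
    and C: "c1*c2 - s1 * s2 < 0"
    and h2: "1 - 2*c1 + 4*(c1*c2 - s1 * s2)*c2 \<le> 0"
    and h3: "1 - 2*c2 + 4*(c1*c2 - s1 * s2)*c1 \<le> 0"
    and h4: "(1-c1)*(1-c2) \<le> s1 * s2"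
  shows "(r1*c1 + r2*c2 - 1)^2 + (r1 * s1 - r2 * s2)^2 < 1"
proof -
  define C where "C = c1*c2 - s1 * s2"
  define p where "p = r1 - 2*c1"
  define q where "q = r2 - 2*c2"
  define P where "P = 1 - 2*c1"
  define Q where "Q = 1 - 2*c2"
  have g: "8*C*c1*c2 + p*(1+4*C*c2) + q*(1+4*C*c1) + p*q*(2*C) < 0"
  proof (rule affine_box_neg)
    show "8*C*c1*c2 < 0" using assms C_def by (simp add: mult_neg_pos)
    show "8*C*c1*c2 + P*(1+4*C*c2) \<le> 0" using h2 unfolding C_def P_def by (simp add: algebra_simps)
    show "8*C*c1*c2 + Q*(1+4*C*c1) \<le> 0" using h3 unfolding C_def Q_def by (simp add: algebra_simps)
    have "8*C*c1*c2 + P*(1+4*C*c2) + Q*(1+4*C*c1) + P*Q*(2*C) = 2 - 2*c1 - 2*c2 + 2*C"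
      unfolding P_def Q_def by algebra
    also have "\<dots> \<le> 0" using h4 unfolding C_def by (simp add: algebra_simps)
    finally show "8*C*c1*c2 + P*(1+4*C*c2) + Q*(1+4*C*c1) + P*Q*(2*C) \<le> 0" .
  qed (use assms in \<open>auto simp: p_def q_def P_def Q_def\<close>)
  have e: "(r1*c1 + r2*c2 - 1)^2 + (r1 * s1 - r2 * s2)^2 - 1
      = 8*C*c1*c2 + p*(1+4*C*c2) + q*(1+4*C*c1) + p*q*(2*C) + p*(p-P) + q*(q-Q)"
    unfolding p_def q_def P_def Q_def C_def
    using assms(3,4) by algebra
  have "p*(p-P) \<le> 0" "q*(q-Q) \<le> 0" using assms
    by (auto simp: p_def q_def P_def Q_def mult_nonneg_nonpos)
  then show ?thesis using e g by linarith
qed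

lemma geo:
  fixes r1 r2 a1 a2 :: real
  assumes r1: "0 < r1" "r1 < 1" and r2: "0 < r2" "r2 < 1"
    and c1: "2*cos a1 \<le> r1" and c2: "2*cos a2 \<le> r2"
    and a: "0 \<le> a1" "0 \<le> a2" "a1 + a2 \<le> 5*pi/6"
  shows "cmod (complex_of_real r1 * cis a1 + complex_of_real r2 * cis (-a2) - 1) < 1"
proof -
  have lt1: "cos a1 < 1/2" "cos a2 < 1/2" using r1 r2 c1 c2 by auto
  have g1: "a1 > pi/3"
  proof (rule ccontr)
    assume "\<not> a1 > pi/3"
    then have "cos (pi/3) \<le> cos a1" using a by (intro cos_monotone_0_pi_le) auto
    then show False using lt1 cos_60 by simp
  qed
  have g2: "a2 > pi/3"
  proof (rule ccontr)
    assume "\<not> a2 > pi/3"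
    then have "cos (pi/3) \<le> cos a2" using a by (intro cos_monotone_0_pi_le) auto
    then show False using lt1 cos_60 by simp
  qed
  have l1: "a1 < pi/2" and l2: "a2 < pi/2" using g1 g2 a by auto
  have cp1: "0 < cos a1" and cp2: "0 < cos a2" using l1 l2 a by (auto intro!: cos_gt_zero_pi)
  have sp1: "0 < sin a1" and sp2: "0 < sin a2" using l1 l2 g1 g2 by (auto intro!: sin_gt_zero)
  have Ceq: "cos (a1 + a2) = cos a1 * cos a2 - sin a1 * sin a2" by (simp add: cos_add)
  have Cneg: "cos (a1 + a2) < 0"
  proof -
    have "cos (a1 + a2) < cos (pi/2)" using g1 g2 a by (intro cos_monotone_0_pi) auto
    then show ?thesis by simp
  qed
  have corner: "1 - 2*cos x + 4*cos (x + y)*cos y \<le> 0"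
    if "pi/3 < x" "pi/3 < y" "x < pi/2" "y < pi/2" "x + y \<le> 5*pi/6" for x y
  proof -
    have e1: "cos x = cos (x+y) * cos y + sin (x+y) * sin y"
      using cos_diff[of "x+y" y] by simp
    have e2: "cos (x + 2*y) = cos (x+y) * cos y - sin (x+y) * sin y"
      using cos_add[of "x+y" y] by (simp add: algebra_simps)
    have "cos (x + 2*y - pi) \<ge> cos (pi/3)"
      using that by (intro cos_monotone_0_pi_le) auto
    then have "cos (x + 2*y) \<le> -1/2" using cos_60 by simp
    then show ?thesis using e1 e2 by (simp add: algebra_simps)
  qed
  have h2: "1 - 2*cos a1 + 4*(cos a1 * cos a2 - sin a1 * sin a2)*cos a2 \<le> 0"
    using corner[of a1 a2] g1 g2 l1 l2 a Ceq by simp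
  have h3: "1 - 2*cos a2 + 4*(cos a1 * cos a2 - sin a1 * sin a2)*cos a1 \<le> 0"
    using corner[of a2 a1] g1 g2 l1 l2 a Ceq by (simp add: add.commute mult.commute)
  have h4: "(1 - cos a1)*(1 - cos a2) \<le> sin a1 * sin a2"
  proof -
    have q1: "0 \<le> (1 - cos a1)*(1 - cos a2)" using lt1 by simp
    have "((1 - cos a1)*(1 - cos a2))^2 \<le> (1 - cos a1)*(1 - cos a2)*((1 + cos a1)*(1 + cos a2))"
    proof -
      have "(1 - cos a1)*(1 - cos a2) \<le> (1 + cos a1)*(1 + cos a2)"
        using cp1 cp2 by (simp add: algebra_simps)
      then show ?thesis using q1 by (simp add: power2_eq_square mult_left_mono)
    qed
    also have "\<dots> = (sin a1 * sin a2)^2"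
      using sin_squared_eq[of a1] sin_squared_eq[of a2] by algebra
    finally show ?thesis using sp1 sp2 by (meson power2_le_imp_le less_eq_real_def mult_pos_pos)
  qed
  have main: "(r1*cos a1 + r2*cos a2 - 1)^2 + (r1 * sin a1 - r2 * sin a2)^2 < 1"
    by (rule alg) (use cp1 cp2 c1 c2 r1 r2 h2 h3 h4 Cneg Ceq in auto)
  have "(cmod (complex_of_real r1 * cis a1 + complex_of_real r2 * cis (-a2) - 1))^2
      = (r1*cos a1 + r2*cos a2 - 1)^2 + (r1 * sin a1 - r2 * sin a2)^2"
    by (simp add: cmod_power2)
  then have "(cmod (complex_of_real r1 * cis a1 + complex_of_real r2 * cis (-a2) - 1))^2 < 1^2"
    using main by simp
  then show ?thesis by (meson abs_ge_self abs_le_iff norm_ge_zero power_less_imp_less_base zero_le_one)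
qed


lemma Arg_cis_mult:
  assumes "0 < t" "-pi < a" "a \<le> pi"
  shows "Arg (complex_of_real t * cis a) = a"
  by (rule Arg_unique[of t]) (use assms in \<open>auto simp: cis_conv_exp\<close>)

lemma polar: "z \<noteq> 0 \<Longrightarrow> z = complex_of_real (cmod z) * cis (Arg z)"
  by (metis rcis_cmod_Arg rcis_def)

lemma cone0_Arg:
  assumes "z \<in> cone 0 th al" "z \<noteq> 0" "-pi < th - al/2" "th + al/2 \<le> pi"
  shows "th - al/2 \<le> Arg z \<and> Arg z \<le> th + al/2"
proof -
  obtain t ph where z: "z = complex_of_real t * cis ph" "t \<ge> 0" "th - al/2 \<le> ph" "ph \<le> th + al/2"
    using assms(1) unfolding cone_def by auto
  have "t \<noteq> 0" using z assms(2) by auto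
  then have "Arg z = ph" using z assms by (subst z(1), intro Arg_cis_mult) auto
  then show ?thesis using z by simp
qed

lemma in_cone0:
  assumes "t \<ge> 0" "th - al/2 \<le> ph" "ph \<le> th + al/2"
  shows "complex_of_real t * cis ph \<in> cone 0 th al"
  unfolding cone_def using assms by auto

lemma extremal:
  fixes S :: "complex set" and al :: real
  assumes fin: "finite S" and nz: "0 \<notin> S" and al: "0 < al" "al \<le> 5*pi/6"
    and ng: "\<And>th. cone 0 th al \<inter> S \<noteq> {}"
  shows "\<exists>x\<in>S. \<exists>y\<in>S. 0 \<le> Arg x \<and> Arg y < 0 \<and> Arg x - Arg y \<le> al"
proof -
  define U where "U = {z\<in>S. 0 \<le> Arg z}"
  define L where "L = {z\<in>S. Arg z < 0}"
  have "U \<noteq> {}"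
  proof -
    obtain z where z: "z \<in> cone 0 (pi/2) al" "z \<in> S" using ng[of "pi/2"] by auto
    have "z \<noteq> 0" using z nz by auto
    then have "pi/2 - al/2 \<le> Arg z" using cone0_Arg[OF z(1)] al by auto
    then have "0 \<le> Arg z" using al by auto
    then show ?thesis using z unfolding U_def by auto
  qed
  have "L \<noteq> {}"
  proof -
    obtain z where z: "z \<in> cone 0 (-pi/2) al" "z \<in> S" using ng[of "-pi/2"] by auto
    have "z \<noteq> 0" using z nz by auto
    then have "Arg z \<le> -pi/2 + al/2" using cone0_Arg[OF z(1)] al by auto
    then have "Arg z < 0" using al by auto
    then show ?thesis using z unfolding L_def by auto
  qed
  have fU: "finite U" and fL: "finite L" using fin by (auto simp: U_def L_def)
  define pU where "pU = Min (Arg ` U)"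
  define pL where "pL = Min ((\<lambda>z. - Arg z) ` L)"
  have "pU \<in> Arg ` U" unfolding pU_def using fU \<open>U \<noteq> {}\<close> by (intro Min_in) auto
  then obtain x where x: "x \<in> U" "Arg x = pU" by auto
  have "pL \<in> (\<lambda>z. - Arg z) ` L" unfolding pL_def using fL \<open>L \<noteq> {}\<close> by (intro Min_in) auto
  then obtain y where y: "y \<in> L" "- Arg y = pL" by auto
  have pUle: "\<And>z. z \<in> U \<Longrightarrow> pU \<le> Arg z" unfolding pU_def using fU by auto
  have pLle: "\<And>z. z \<in> L \<Longrightarrow> pL \<le> - Arg z" unfolding pL_def using fL by auto
  have "pU + pL \<le> al"
  proof (rule ccontr)
    assume H: "\<not> pU + pL \<le> al"
    define th where "th = (pU - pL)/2"
    have b1: "pU \<le> pi" using x Arg_le_pi by metis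
    have b2: "pL < pi" using y mpi_less_Arg[of y] by auto
    obtain z where z: "z \<in> cone 0 th al" "z \<in> S" using ng[of th] by auto
    have "z \<noteq> 0" using z nz by auto
    have c1: "-pi < th - al/2" "th + al/2 \<le> pi" using H b1 b2 al y(1) pi_gt_zero unfolding th_def L_def y(2)[symmetric] by (auto simp: field_simps)
    have zb: "th - al/2 \<le> Arg z \<and> Arg z \<le> th + al/2"
      using cone0_Arg[OF z(1) \<open>z \<noteq> 0\<close> c1] .
    show False
    proof (cases "0 \<le> Arg z")
      case True
      then have "z \<in> U" using z unfolding U_def by auto
      then have "pU \<le> Arg z" by (rule pUle)
      then show False using zb H unfolding th_def by (auto simp: field_simps)
    next
      case False
      then have "z \<in> L" using z unfolding L_def by auto
      then have "pL \<le> - Arg z" by (rule pLle)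
      then show False using zb H unfolding th_def by (auto simp: field_simps)
    qed
  qed
  then show ?thesis using x y unfolding U_def L_def by force
qed

lemma Re_polar: "z \<noteq> 0 \<Longrightarrow> Re z = cmod z * cos (Arg z)"
proof -
  assume "z \<noteq> 0"
  then have "Re z = Re (complex_of_real (cmod z) * cis (Arg z))" using polar by metis
  then show ?thesis by simp
qed

lemma twocos:
  assumes "z \<noteq> 0" "1 \<le> cmod (z - 1)"
  shows "2 * cos (Arg z) \<le> cmod z"
proof -
  have "1 \<le> (cmod (z - 1))^2" using assms(2) by (simp add: one_le_power)
  also have "(cmod (z - 1))^2 = (Re z - 1)^2 + (Im z)^2" by (simp add: cmod_power2)
  also have "\<dots> = (cmod z)^2 - 2 * Re z + 1" using cmod_power2[of z] by (simp add: power2_eq_square algebra_simps)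
  finally have "2 * (cmod z * cos (Arg z)) \<le> cmod z * cmod z"
    using Re_polar[OF assms(1)] by (simp add: power2_eq_square)
  then have "cmod z * (2 * cos (Arg z)) \<le> cmod z * cmod z" by (simp add: algebra_simps)
  then show ?thesis using assms(1) by (simp add: mult_le_cancel_left)
qed

lemma pair_close:
  assumes "X \<noteq> 0" "Y \<noteq> 0" "cmod X < 1" "cmod Y < 1" "1 \<le> cmod (X - 1)" "1 \<le> cmod (Y - 1)"
    "0 \<le> Arg X" "Arg Y < 0" "Arg X - Arg Y \<le> 5*pi/6"
  shows "cmod (X + Y - 1) < 1"
proof -
  have "cmod (complex_of_real (cmod X) * cis (Arg X) + complex_of_real (cmod Y) * cis (- (- Arg Y)) - 1) < 1"
    by (rule geo) (use assms twocos[of X] twocos[of Y] in auto)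
  then show ?thesis using polar[OF assms(1)] polar[OF assms(2)] by simp
qed

lemma nogap_transfer:
  assumes "u \<noteq> v" "\<not> has_gap u al A"
  shows "cone 0 th al \<inter> (\<lambda>z. (z-u)/(v-u)) ` A \<noteq> {}"
proof -
  define b where "b = Arg (v - u)"
  define d where "d = cmod (v - u)"
  have d: "d > 0" using assms unfolding d_def by auto
  have vu: "v - u = complex_of_real d * cis b" unfolding d_def b_def using assms by (intro polar) auto
  obtain z where z: "z \<in> cone u (th + b) al" "z \<in> A" using assms(2) unfolding has_gap_def by blast
  then obtain t ph where tp: "z = u + complex_of_real t * cis ph" "t \<ge> 0"
    "th + b - al/2 \<le> ph" "ph \<le> th + b + al/2" unfolding cone_def by auto
  have "(z - u)/(v - u) = complex_of_real (t/d) * cis (ph - b)"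
    using d by (simp add: tp(1) vu cis_divide[symmetric])
  also have "\<dots> \<in> cone 0 th al" using tp d by (intro in_cone0) auto
  finally show ?thesis using z by blast
qed

lemma caseC:
  fixes u v :: complex and A B :: "complex set"
  assumes uv: "u \<noteq> v" and fin: "finite A" "finite B" and nin: "u \<notin> A" "v \<notin> B"
    and al: "0 < al" "al \<le> 5*pi/6"
    and gA: "\<not> has_gap u al A" and gB: "\<not> has_gap v al B"
    and dA: "\<And>x. x \<in> A \<Longrightarrow> dist u x < dist u v"
    and dB: "\<And>y. y \<in> B \<Longrightarrow> dist v y < dist u v"
    and fA: "\<And>x. x \<in> A \<Longrightarrow> dist u v \<le> dist x v"
    and fB: "\<And>y. y \<in> B \<Longrightarrow> dist u v \<le> dist y u"
  shows "\<exists>x\<in>A. \<exists>y\<in>B. dist x y < dist u v"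
proof -
  define T where "T = (\<lambda>z. (z-u)/(v-u))"
  define T' where "T' = (\<lambda>z. (z-v)/(u-v))"
  define d where "d = dist u v"
  have d: "d > 0" using uv unfolding d_def by auto
  have nT: "\<And>a b. cmod (T a - T b) = dist a b / d"
    unfolding T_def d_def using uv
    by (simp add: dist_norm diff_divide_distrib[symmetric] norm_divide norm_minus_commute)
  have nT': "\<And>a b. cmod (T' a - T' b) = dist a b / d"
    unfolding T'_def d_def using uv
    by (simp add: dist_norm diff_divide_distrib[symmetric] norm_divide norm_minus_commute)
  have Tu: "T u = 0" and Tv: "T v = 1" and T'u: "T' u = 1" and T'v: "T' v = 0"
    unfolding T_def T'_def using uv by auto
  have TT': "\<And>z. T z = 1 - T' z" unfolding T_def T'_def using uv
    by (simp add: field_simps)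
  have eA: "\<exists>x\<in>T`A. \<exists>y\<in>T`A. 0 \<le> Arg x \<and> Arg y < 0 \<and> Arg x - Arg y \<le> al"
  proof (rule extremal)
    show "0 \<notin> T ` A" using nin uv unfolding T_def by auto
    show "\<And>th. cone 0 th al \<inter> T ` A \<noteq> {}" unfolding T_def by (rule nogap_transfer[OF uv gA])
  qed (use fin al in auto)
  have eB: "\<exists>x\<in>T'`B. \<exists>y\<in>T'`B. 0 \<le> Arg x \<and> Arg y < 0 \<and> Arg x - Arg y \<le> al"
  proof (rule extremal)
    show "0 \<notin> T' ` B" using nin uv unfolding T'_def by auto
    show "\<And>th. cone 0 th al \<inter> T' ` B \<noteq> {}" unfolding T'_def
      by (rule nogap_transfer) (use uv gB in auto)
  qed (use fin al in auto)
  obtain x1 x2 where x: "x1 \<in> A" "x2 \<in> A" "0 \<le> Arg (T x1)" "Arg (T x2) < 0"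
    "Arg (T x1) - Arg (T x2) \<le> al" using eA by auto
  obtain y1 y2 where y: "y1 \<in> B" "y2 \<in> B" "0 \<le> Arg (T' y1)" "Arg (T' y2) < 0"
    "Arg (T' y1) - Arg (T' y2) \<le> al" using eB by auto
  have pA: "T x \<noteq> 0 \<and> cmod (T x) < 1 \<and> 1 \<le> cmod (T x - 1)" if "x \<in> A" for x
  proof -
    have "cmod (T x) = cmod (T x - T u)" using Tu by simp
    also have "\<dots> = dist x u / d" by (rule nT)
    finally have a: "cmod (T x) = dist x u / d" .
    have "cmod (T x - 1) = cmod (T x - T v)" using Tv by simp
    also have "\<dots> = dist x v / d" by (rule nT)
    finally have b: "cmod (T x - 1) = dist x v / d" .
    have "dist x u / d < 1" using dA[OF that] d unfolding d_def by (simp add: dist_commute)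
    moreover have "1 \<le> dist x v / d" using fA[OF that] d unfolding d_def by simp
    moreover have "T x \<noteq> 0" using a nin that d by auto
    ultimately show ?thesis using a b by simp
  qed
  have pB: "T' y \<noteq> 0 \<and> cmod (T' y) < 1 \<and> 1 \<le> cmod (T' y - 1)" if "y \<in> B" for y
  proof -
    have "cmod (T' y) = cmod (T' y - T' v)" using T'v by simp
    also have "\<dots> = dist y v / d" by (rule nT')
    finally have a: "cmod (T' y) = dist y v / d" .
    have "cmod (T' y - 1) = cmod (T' y - T' u)" using T'u by simp
    also have "\<dots> = dist y u / d" by (rule nT')
    finally have b: "cmod (T' y - 1) = dist y u / d" .
    have "dist y v / d < 1" using dB[OF that] d unfolding d_def by (simp add: dist_commute)
    moreover have "1 \<le> dist y u / d" using fB[OF that] d unfolding d_def by (simp add: dist_commute)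
    moreover have "T' y \<noteq> 0" using a nin that d by auto
    ultimately show ?thesis using a b by simp
  qed
  have key: "dist x y < d" if "x \<in> A" "y \<in> B" "cmod (T x + T' y - 1) < 1" for x y
  proof -
    have "T x + T' y - 1 = T x - T y" using TT'[of y] by simp
    then have "cmod (T x + T' y - 1) = cmod (T x - T y)" by (rule arg_cong)
    also have "\<dots> = dist x y / d" by (rule nT)
    finally have "dist x y / d < 1" using that(3) by simp
    then show ?thesis using d by simp
  qed
  show ?thesis
  proof (cases "Arg (T x1) - Arg (T' y2) \<le> al")
    case True
    have "cmod (T x1 + T' y2 - 1) < 1"
      by (rule pair_close) (use pA[OF x(1)] pB[OF y(2)] x y True al in auto)
    then show ?thesis using key x y unfolding d_def by blast
  next
    case False
    then have "Arg (T' y1) - Arg (T x2) \<le> al" using x y by linarith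
    then have "cmod (T' y1 + T x2 - 1) < 1"
      by (intro pair_close) (use pA[OF x(2)] pB[OF y(1)] x y al in auto)
    then have "cmod (T x2 + T' y1 - 1) < 1" by (simp add: add.commute)
    then show ?thesis using key x y unfolding d_def by blast
  qed
qed


lemma lex_trans: "lex_less a b \<Longrightarrow> lex_less b c \<Longrightarrow> lex_less a c"
  unfolding lex_less_def by auto
lemma lex_irrefl: "\<not> lex_less a a"
  unfolding lex_less_def by auto
lemma eid_comm: "eid ID a b = eid ID b a"
  unfolding eid_def by (auto simp: dist_commute)
lemma lex_dist: "dist a b < dist u v \<Longrightarrow> lex_less (eid ID a b) (eid ID u v)"
  unfolding lex_less_def eid_def by auto
lemma lex_dist_le: "lex_less (eid ID a b) (eid ID u v) \<Longrightarrow> dist a b \<le> dist u v"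
  unfolding lex_less_def eid_def by auto

lemma rtranclp_lift:
  assumes "\<And>a b. P a b \<Longrightarrow> Q\<^sup>*\<^sup>* a b" "P\<^sup>*\<^sup>* x y"
  shows "Q\<^sup>*\<^sup>* x y"
  using assms(2)
proof (induction rule: rtranclp_induct)
  case base then show ?case by simp
next
  case (step y z) then show ?case using assms(1) by (meson rtranclp_trans)
qed

lemma idx_range:
  assumes "k \<ge> 1"
  shows "cbtc_index V r k al u \<in> {1..k}"
proof (cases "\<exists>i\<in>{1..k}. \<not> has_gap u al (S_set V r i u)")
  case True
  then obtain i where "i \<in> {1..k} \<and> \<not> has_gap u al (S_set V r i u)" by blast
  then have "(LEAST i. i \<in> {1..k} \<and> \<not> has_gap u al (S_set V r i u)) \<in> {1..k} \<and>
      \<not> has_gap u al (S_set V r (LEAST i. i \<in> {1..k} \<and> \<not> has_gap u al (S_set V r i u)) u)"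
    by (rule LeastI)
  then show ?thesis using True unfolding cbtc_index_def by simp
next
  case False then show ?thesis using assms unfolding cbtc_index_def by simp
qed

lemma r_le_k:
  fixes r :: "nat \<Rightarrow> real" and i k :: nat
  assumes "\<And>i j. 1 \<le> i \<Longrightarrow> i < j \<Longrightarrow> j \<le> k \<Longrightarrow> r i < r j" "i \<in> {1..k}"
  shows "r i \<le> r k"
proof (cases "i = k")
  case False
  then have "i < k" using assms(2) by auto
  then show ?thesis using assms(1)[of i k] assms(2) by simp
qed simp

lemma E_alpha_R:
  assumes "k \<ge> 1" "\<And>i j. 1 \<le> i \<Longrightarrow> i < j \<Longrightarrow> j \<le> k \<Longrightarrow> r i < r j" "r k = R"
    and "E_alpha V r k al u v"
  shows "E_R V R u v"
proof -
  have b: "\<And>x. r (cbtc_index V r k al x) \<le> R"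
    using r_le_k[OF assms(2) idx_range[OF assms(1)]] assms(3) by auto
  show ?thesis using assms(4) b[of u] b[of v]
    unfolding E_alpha_def E_R_def N_alpha_def S_set_def by (auto simp: dist_commute)
qed

lemma notE_facts:
  assumes "k \<ge> 1" "\<And>i j. 1 \<le> i \<Longrightarrow> i < j \<Longrightarrow> j \<le> k \<Longrightarrow> r i < r j" "r k = R"
    and "u \<in> V" "v \<in> V" "u \<noteq> v" "dist u v \<le> R" "v \<notin> N_alpha V r k al u"
  shows "\<not> has_gap u al (N_alpha V r k al u) \<and> (\<forall>x\<in>N_alpha V r k al u. dist u x < dist u v)"
proof -
  let ?P = "\<lambda>i. i \<in> {1..k} \<and> \<not> has_gap u al (S_set V r i u)"
  define i where "i = cbtc_index V r k al u"
  have vi: "r i < dist u v" using assms(5,6,8) unfolding N_alpha_def S_set_def i_def by auto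
  have ex: "\<exists>i\<in>{1..k}. \<not> has_gap u al (S_set V r i u)"
  proof (rule ccontr)
    assume "\<not> ?thesis"
    then have "i = k" unfolding i_def cbtc_index_def by simp
    then show False using vi assms(3,7) by simp
  qed
  then have ii: "i = (LEAST i. ?P i)" unfolding i_def cbtc_index_def by simp
  from ex obtain j where "?P j" by blast
  then have "?P (LEAST i. ?P i)" by (rule LeastI)
  then have "\<not> has_gap u al (S_set V r i u)" using ii by simp
  then show ?thesis using vi unfolding N_alpha_def i_def[symmetric] S_set_def by auto
qed

lemma vangle_short:
  assumes "vangle v u w < pi/3" "dist u w \<le> dist u v"
  shows "dist w v < dist u v"
proof -
  define a where "a = v - u"
  define b where "b = w - u"
  define q where "q = (a \<bullet> b) / (norm a * norm b)"
  have va: "vangle v u w = arccos q" unfolding vangle_def q_def a_def b_def by simp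
  have anz: "a \<noteq> 0" and bnz: "b \<noteq> 0"
  proof -
    have "arccos 0 = pi/2" by simp
    then show "a \<noteq> 0" "b \<noteq> 0" using assms(1) va unfolding q_def by auto
  qed
  have qb: "\<bar>q\<bar> \<le> 1" unfolding q_def using anz bnz Cauchy_Schwarz_ineq2[of a b]
    by (simp add: abs_div divide_le_eq_1)
  have "arccos q < arccos (1/2)"
    using assms(1) va arccos_cos[of "pi/3"] cos_60 by simp
  then have "1/2 < q" using qb arccos_less_mono[of q "1/2"] by simp
  then have ab: "norm a * norm b < 2 * (a \<bullet> b)" using anz bnz unfolding q_def
    by (simp add: field_simps)
  have "(norm (b - a))^2 = (norm b)^2 + (norm a)^2 - 2 * (a \<bullet> b)"
    by (simp add: power2_norm_eq_inner inner_diff_left inner_diff_right inner_commute)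
  also have "\<dots> < (norm a)^2 + norm b * (norm b - norm a)" using ab by (simp add: power2_eq_square algebra_simps)
  also have "\<dots> \<le> (norm a)^2"
  proof -
    have "norm b \<le> norm a" using assms(2) unfolding a_def b_def by (simp add: dist_norm norm_minus_commute)
    then show ?thesis by (simp add: mult_nonneg_nonpos)
  qed
  finally have "norm (b - a) < norm a" by (meson norm_ge_zero power_less_imp_less_base)
  then show ?thesis unfolding a_def b_def by (simp add: dist_norm norm_minus_commute)
qed

theorem theorem5:
  fixes V :: "complex set" and r :: "nat \<Rightarrow> real" and k :: nat and R alpha :: real
    and ID :: "complex \<Rightarrow> int"
  assumes "finite V"
    and "k \<ge> 1"
    and "r 1 > 0"
    and "\<And>i j. 1 \<le> i \<Longrightarrow> i < j \<Longrightarrow> j \<le> k \<Longrightarrow> r i < r j"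
    and "r k = R"
    and "inj_on ID V"
    and "0 < alpha" and "alpha \<le> 5 * pi / 6"
  shows "(\<forall>u\<in>V. \<forall>v\<in>V. (E_nr V r k alpha ID)\<^sup>*\<^sup>* u v \<longleftrightarrow> (E_R V R)\<^sup>*\<^sup>* u v)
       \<and> (\<forall>u v. redundant V r k alpha ID u v \<longrightarrow> (E_nr V r k alpha ID)\<^sup>*\<^sup>* u v)"
proof -
  let ?Ea = "E_alpha V r k alpha"
  let ?Nr = "E_nr V r k alpha ID"
  let ?ER = "E_R V R"
  let ?N = "N_alpha V r k alpha"
  have EaR: "\<And>a b. ?Ea a b \<Longrightarrow> ?ER a b" using E_alpha_R assms(2,4,5) by blast
  define f where "f = (\<lambda>a b. card {p \<in> V \<times> V. lex_less (eid ID (fst p) (snd p)) (eid ID a b)})"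
  have fdec: "f x y < f a b" if "x \<in> V" "y \<in> V" "lex_less (eid ID x y) (eid ID a b)" for x y a b
  proof -
    have "{p \<in> V \<times> V. lex_less (eid ID (fst p) (snd p)) (eid ID x y)}
        \<subset> {p \<in> V \<times> V. lex_less (eid ID (fst p) (snd p)) (eid ID a b)}"
    proof
      show "{p \<in> V \<times> V. lex_less (eid ID (fst p) (snd p)) (eid ID x y)}
        \<subseteq> {p \<in> V \<times> V. lex_less (eid ID (fst p) (snd p)) (eid ID a b)}"
        using that(3) by (auto intro: lex_trans)
      have "(x, y) \<in> {p \<in> V \<times> V. lex_less (eid ID (fst p) (snd p)) (eid ID a b)}"
        using that by simp
      moreover have "(x, y) \<notin> {p \<in> V \<times> V. lex_less (eid ID (fst p) (snd p)) (eid ID x y)}"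
        using lex_irrefl by simp
      ultimately show "{p \<in> V \<times> V. lex_less (eid ID (fst p) (snd p)) (eid ID x y)}
        \<noteq> {p \<in> V \<times> V. lex_less (eid ID (fst p) (snd p)) (eid ID a b)}" by blast
    qed
    then show ?thesis unfolding f_def using assms(1) by (intro psubset_card_mono) auto
  qed
  have finN: "finite (?N a)" for a using assms(1) unfolding N_alpha_def S_set_def by auto
  have Nsub: "x \<in> ?N a \<Longrightarrow> x \<in> V \<and> x \<noteq> a" for a x unfolding N_alpha_def S_set_def by auto
  have main: "\<forall>u v. f u v = n \<longrightarrow> ?ER u v \<longrightarrow> ?Nr\<^sup>*\<^sup>* u v" for n
  proof (induction n rule: less_induct)
    case (less n)
    show ?case
    proof (intro allI impI)
      fix u v assume fn: "f u v = n" and uv: "?ER u v"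
      have uV: "u \<in> V" and vV: "v \<in> V" and une: "u \<noteq> v" and dR: "dist u v \<le> R"
        using uv unfolding E_R_def by auto
      have IH: "?Nr\<^sup>*\<^sup>* a b" if "?ER a b" "lex_less (eid ID a b) (eid ID u v)" for a b
      proof -
        have "f a b < n" using fdec[of a b u v] that fn unfolding E_R_def by auto
        then show ?thesis using less.IH that(1) by blast
      qed
      have IHd: "?Nr\<^sup>*\<^sup>* a b" if "a \<in> V" "b \<in> V" "a \<noteq> b" "dist a b < dist u v" for a b
        using IH[of a b] that dR lex_dist[of a b u v ID] unfolding E_R_def by auto
      show "?Nr\<^sup>*\<^sup>* u v"
      proof (cases "?Ea u v")
        case Ea: True
        show ?thesis
        proof (cases "redundant V r k alpha ID u v")
          case False
          then show ?thesis using Ea unfolding E_nr_def by auto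
        next
          case True
          then have "redundant_at V r k alpha ID u v \<or> redundant_at V r k alpha ID v u"
            unfolding redundant_def by auto
          then show ?thesis
          proof
            assume "redundant_at V r k alpha ID u v"
            then obtain w where w: "w \<in> V" "?Ea u w" "vangle v u w < pi/3"
              "lex_less (eid ID u w) (eid ID u v)" unfolding redundant_at_def by auto
            have d1: "dist u w \<le> dist u v" using lex_dist_le[OF w(4)] .
            have d2: "dist w v < dist u v" by (rule vangle_short[OF w(3) d1])
            have wv: "w \<noteq> v" using w(4) lex_irrefl by metis
            have p1: "?Nr\<^sup>*\<^sup>* u w" using IH[OF EaR[OF w(2)] w(4)] .
            have p2: "?Nr\<^sup>*\<^sup>* w v" using IHd[OF w(1) vV wv d2] .
            show ?thesis using p1 p2 by (rule rtranclp_trans)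
          next
            assume "redundant_at V r k alpha ID v u"
            then obtain w where w: "w \<in> V" "?Ea v w" "vangle u v w < pi/3"
              "lex_less (eid ID v w) (eid ID v u)" unfolding redundant_at_def by auto
            have d1: "dist v w \<le> dist v u" using lex_dist_le[OF w(4)] .
            have d2: "dist w u < dist v u" by (rule vangle_short[OF w(3) d1])
            have wu: "w \<noteq> u" using w(4) lex_irrefl by metis
            have l: "lex_less (eid ID w v) (eid ID u v)" using w(4) eid_comm by metis
            have ER: "?ER w v" using EaR[OF w(2)] unfolding E_R_def by (auto simp: dist_commute)
            have p2: "?Nr\<^sup>*\<^sup>* w v" using IH[OF ER l] .
            have p1: "?Nr\<^sup>*\<^sup>* u w" using IHd[OF uV w(1) wu[symmetric]] d2 by (simp add: dist_commute)
            show ?thesis using p1 p2 by (rule rtranclp_trans)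
          qed
        qed
      next
        case nE: False
        have v1: "v \<notin> ?N u" and u1: "u \<notin> ?N v" using nE uV vV unfolding E_alpha_def by auto
        have Fu: "\<not> has_gap u alpha (?N u) \<and> (\<forall>x\<in>?N u. dist u x < dist u v)"
          by (rule notE_facts) (use assms(2,4,5) uV vV une dR v1 in auto)
        have Fv: "\<not> has_gap v alpha (?N v) \<and> (\<forall>x\<in>?N v. dist v x < dist v u)"
          by (rule notE_facts) (use assms(2,4,5) uV vV une dR u1 in \<open>auto simp: dist_commute\<close>)
        have pu: "?Nr\<^sup>*\<^sup>* u x" if "x \<in> ?N u" for x
          using IHd[of u x] Fu that Nsub[OF that] uV by auto
        have pv: "?Nr\<^sup>*\<^sup>* y v" if "y \<in> ?N v" for y
          using IHd[of y v] Fv that Nsub[OF that] vV by (auto simp: dist_commute)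
        show ?thesis
        proof (cases "\<exists>x\<in>?N u. dist x v < dist u v")
          case True
          then obtain x where x: "x \<in> ?N u" "dist x v < dist u v" by blast
          have "x \<noteq> v" using x v1 by auto
          then have "?Nr\<^sup>*\<^sup>* x v" using IHd[of x v] x Nsub[OF x(1)] vV by auto
          then show ?thesis using pu[OF x(1)] by (meson rtranclp_trans)
        next
          case F1: False
          show ?thesis
          proof (cases "\<exists>y\<in>?N v. dist y u < dist u v")
            case True
            then obtain y where y: "y \<in> ?N v" "dist y u < dist u v" by blast
            have "y \<noteq> u" using y u1 by auto
            then have "?Nr\<^sup>*\<^sup>* u y" using IHd[of u y] y Nsub[OF y(1)] uV by (auto simp: dist_commute)
            then show ?thesis using pv[OF y(1)] by (meson rtranclp_trans)
          next
            case F2: False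
            have "\<exists>x\<in>?N u. \<exists>y\<in>?N v. dist x y < dist u v"
              by (rule caseC) (use une finN Nsub assms(7,8) Fu Fv F1 F2 in \<open>auto simp: dist_commute\<close>)
            then obtain x y where xy: "x \<in> ?N u" "y \<in> ?N v" "dist x y < dist u v" by blast
            have "?Nr\<^sup>*\<^sup>* x y"
            proof (cases "x = y")
              case True then show ?thesis by simp
            next
              case False then show ?thesis using IHd[of x y] xy Nsub by auto
            qed
            then show ?thesis using pu[OF xy(1)] pv[OF xy(2)] by (meson rtranclp_trans)
          qed
        qed
      qed
    qed
  qed
  have mainR: "\<And>a b. ?ER a b \<Longrightarrow> ?Nr\<^sup>*\<^sup>* a b" using main by blast
  have NrR: "\<And>a b. ?Nr a b \<Longrightarrow> ?ER a b" using EaR unfolding E_nr_def by blast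
  show ?thesis
  proof (intro conjI ballI allI impI iffI)
    fix u v assume h: "?Nr\<^sup>*\<^sup>* u v"
    have "\<And>a b. ?Nr a b \<Longrightarrow> ?ER\<^sup>*\<^sup>* a b" using NrR by blast
    then show "?ER\<^sup>*\<^sup>* u v" using rtranclp_lift h by metis
  next
    fix u v assume h: "?ER\<^sup>*\<^sup>* u v"
    then show "?Nr\<^sup>*\<^sup>* u v" using rtranclp_lift[OF mainR h] by blast
  next
    fix u v assume "redundant V r k alpha ID u v"
    then show "?Nr\<^sup>*\<^sup>* u v" using mainR EaR unfolding redundant_def by blast
  qed
qed

end
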